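(* Let $(\mathcal{X},\rho,\nu)$ be a metric measure space, where $\rho$ is a separable metric and $\nu$ is a finite Borel measure. Let $\mathbb{X}=(X_n)_{n\ge 0}$ be a stochastic process in $\mathcal{X}$ that is ergodically dominated by $\nu$, and let $\eta:\mathcal{X}\to\mathcal{Y}$ be a measurable label function with $\nu$-negligible boundary, i.e. $\nu(\partial_\eta\mathcal{X})=0$. Then the nearest neighbor rule is online consistent with respect to $(\mathbb{X},\eta)$: for any nearest neighbor process $(\tilde X_n)_{n\ge1}$ of $\mathbb{X}$, \[\limsup_{N\to\infty}\frac1N\sum_{n=1}^N \mathbb{1}\{\eta(X_n)\neq\eta(\tilde X_n)\}=0\quad\text{almost surely.}\]
   Context: For a process $\mathbb{X}=(X_n)_{n\ge0}$, write $\mathbb{X}_{<n}=\{X_0,\dots,X_{n-1}\}$. A nearest neighbor process of $\mathbb{X}$ is any process $(\tilde X_n)_{n\ge1}$ with $\tilde X_n\in\arg\min_{x\in\mathbb{X}_{<n}}\rho(X_n,x)$. For a measurable $\eta:\mathcal{X}\to\mathcal{Y}$, $\mathrm{margin}_\eta(x)=\inf\{\rho(x,x'): \eta(x')\neq\eta(x)\}$ (infimum of the empty set is $+\infty$), and the boundary is $\partial_\eta\mathcal{X}=\{x:\mathrm{margin}_\eta(x)=0\}$. The process $\mathbb{X}$ is ergodically dominated by $\nu$ if for every $\epsilon>0$ there is $\delta>0$ such that every measurable $A\subset\mathcal{X}$ with $\nu(A)<\delta$ satisfies $\limsup_{N\to\infty}\frac1N\sum_{n=1}^N\mathbb{1}\{X_n\in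 A\}<\epsilon$ almost surely. *)

theory Defs
  imports "HOL-Probability.Probability"
begin

definition separable_metric :: "'a::metric_space itself \<Rightarrow> bool" where
  "separable_metric _ \<longleftrightarrow> (\<exists>D::'a set. countable D \<and> closure D = UNIV)"

text \<open>margin of a label function; Inf of the empty set in ereal is +infinity.\<close>
definition margin :: "('a::metric_space \<Rightarrow> 'b) \<Rightarrow> 'a \<Rightarrow> ereal" where
  "margin \<eta> x = Inf {ereal (dist x x') | x'. \<eta> x' \<noteq> \<eta> x}"

definition boundary :: "('a::metric_space \<Rightarrow> 'b) \<Rightarrow> 'a set" where
  "boundary \<eta> = {x. margin \<eta> x = 0}"

definition ergodically_dominated ::
    "'w measure \<Rightarrow> (nat \<Rightarrow> 'w \<Rightarrow> 'a::metric_space) \<Rightarrow> 'a measure \<Rightarrow> bool" where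
  "ergodically_dominated P X \<nu> \<longleftrightarrow>
     (\<forall>\<epsilon>>0. \<exists>\<delta>>0. \<forall>A \<in> sets (borel :: 'a measure). measure \<nu> A < \<delta> \<longrightarrow>
        (AE \<omega> in P. limsup (\<lambda>N. ereal ((\<Sum>n=1..N. indicator A (X n \<omega>)) / real N)) < ereal \<epsilon>))"

definition nn_process ::
    "(nat \<Rightarrow> 'w \<Rightarrow> 'a::metric_space) \<Rightarrow> (nat \<Rightarrow> 'w \<Rightarrow> 'a) \<Rightarrow> bool" where
  "nn_process X Xt \<longleftrightarrow>
     (\<forall>n\<ge>1. \<forall>\<omega>. Xt n \<omega> \<in> {X i \<omega> | i. i < n} \<and>
        (\<forall>i<n. dist (X n \<omega>) (Xt n \<omega>) \<le> dist (X n \<omega>) (X i \<omega>)))"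

end

theory Submission imports Defs begin

lemma margin_nonneg: "0 \<le> margin \<eta> x"
  unfolding margin_def by (auto intro: Inf_greatest)

lemma margin_le: "\<eta> y \<noteq> \<eta> x \<Longrightarrow> margin \<eta> x \<le> ereal (dist x y)"
  unfolding margin_def by (rule Inf_lower) auto

lemma margin_open: "open {x. margin \<eta> x < ereal r}"
proof (rule openI)
  fix x assume "x \<in> {x. margin \<eta> x < ereal r}"
  then have "Inf {ereal (dist x x') | x'. \<eta> x' \<noteq> \<eta> x} < ereal r" by (simp add: margin_def)
  then obtain x' where x': "\<eta> x' \<noteq> \<eta> x" "dist x x' < r"
    by (auto simp: Inf_less_iff)
  show "\<exists>e>0. ball x e \<subseteq> {x. margin \<eta> x < ereal r}"
  proof (intro exI conjI)
    show "0 < r - dist x x'" using x' by simp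
    show "ball x (r - dist x x') \<subseteq> {x. margin \<eta> x < ereal r}"
    proof
      fix y assume y: "y \<in> ball x (r - dist x x')"
      show "y \<in> {x. margin \<eta> x < ereal r}"
      proof (cases "\<eta> y = \<eta> x")
        case True
        then have "margin \<eta> y \<le> ereal (dist y x')" using x' by (intro margin_le) simp
        also have "dist y x' < r" using y dist_triangle[of y x' x] by (simp add: dist_commute)
        finally show ?thesis by simp
      next
        case False
        then have "margin \<eta> y \<le> ereal (dist y x)" by (intro margin_le) simp
        also have "dist y x < r" using y x' zero_le_dist[of x' x] by (simp add: dist_commute) (smt (verit) zero_le_dist)
        finally show ?thesis by simp
      qed
    qed
  qed
qed

lemma ereal_zeroI:
  fixes z :: ereal
  assumes "0 \<le> z" "\<And>m. z < ereal (1 / real (Suc m))"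
  shows "z = 0"
proof (rule ccontr)
  assume "z \<noteq> 0"
  then have pos: "z > 0" using assms(1) by simp
  obtain e where e: "0 < e" "ereal e \<le> z"
  proof (cases z)
    case (real e) then show ?thesis using pos that[of e] by auto
  next
    case PInf then show ?thesis using that[of 1] by auto
  next
    case MInf then show ?thesis using pos by auto
  qed
  obtain m :: nat where "1 / (1 + real m) < e"
    using reals_Archimedean[OF e(1)] by (metis inverse_eq_divide of_nat_Suc)
  then show False using assms(2)[of m] e by (metis ereal_less_eq(3) less_le_not_le order.strict_trans1 of_nat_Suc)
qed

lemma boundary_Inter: "(\<Inter>m. {x. margin \<eta> x < ereal (1 / real (Suc m))}) = boundary \<eta>"
proof (auto simp: boundary_def)
  fix x assume h: "\<forall>m. margin \<eta> x < ereal (1 / (1 + real m))"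
  show "margin \<eta> x = 0"
  proof (rule ccontr)
    assume "margin \<eta> x \<noteq> 0"
    then have pos: "margin \<eta> x > 0" using margin_nonneg[of \<eta> x] by simp
    obtain e where e: "0 < e" "ereal e \<le> margin \<eta> x"
    proof (cases "margin \<eta> x")
      case (real e) then show ?thesis using pos that[of e] by auto
    next
      case PInf then show ?thesis using that[of 1] by auto
    next
      case MInf then show ?thesis using pos by auto
    qed
    obtain m :: nat where "1 / (1 + real m) < e"
      using reals_Archimedean[OF e(1)] by (metis add.commute inverse_eq_divide of_nat_Suc)
    then show False using h[rule_format, of m] e by (metis ereal_less_eq(3) less_le_not_le order.strict_trans1)
  qed
qed

lemma count_bound:
  fixes X Xt :: "nat \<Rightarrow> 'w \<Rightarrow> 'a::metric_space" and B :: "nat \<Rightarrow> 'a set"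
  assumes nn: "nn_process X Xt" and rB: "\<And>k x y. x \<in> B k \<Longrightarrow> y \<in> B k \<Longrightarrow> dist x y < r"
  shows "(\<Sum>n=1..N. if \<eta> (X n \<omega>) \<noteq> \<eta> (Xt n \<omega>) then 1 else 0 :: real)
     \<le> (\<Sum>n=1..N. indicator ({x. margin \<eta> x < ereal r} \<union> - (\<Union>k<K. B k)) (X n \<omega>)) + real K"
proof -
  define A where "A = {x. margin \<eta> x < ereal r} \<union> - (\<Union>k<K. B k)"
  define S where "S = {n\<in>{1..N}. \<eta> (X n \<omega>) \<noteq> \<eta> (Xt n \<omega>) \<and> X n \<omega> \<notin> A}"
  have "\<forall>n\<in>S. \<exists>k. k < K \<and> X n \<omega> \<in> B k" by (auto simp: S_def A_def)
  then obtain f where f: "\<And>n. n \<in> S \<Longrightarrow> f n < K \<and> X n \<omega> \<in> B (f n)" by metis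
  have ne: "f n \<noteq> f m" if "n \<in> S" "m \<in> S" "n < m" for n m
  proof
    assume eq: "f n = f m"
    have m1: "m \<ge> 1" using that by (auto simp: S_def)
    have d1: "dist (X m \<omega>) (Xt m \<omega>) \<le> dist (X m \<omega>) (X n \<omega>)"
      using nn m1 that(3) unfolding nn_process_def by blast
    have d2: "margin \<eta> (X m \<omega>) \<le> ereal (dist (X m \<omega>) (Xt m \<omega>))"
      using that(2) by (intro margin_le) (auto simp: S_def)
    have d3: "\<not> margin \<eta> (X m \<omega>) < ereal r" using that(2) by (auto simp: S_def A_def)
    have "X m \<omega> \<in> B (f m)" "X n \<omega> \<in> B (f m)" using f[OF that(1)] f[OF that(2)] eq by auto
    then have d4: "dist (X m \<omega>) (X n \<omega>) < r" by (rule rB)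
    have "ereal r \<le> ereal (dist (X m \<omega>) (Xt m \<omega>))" using d2 d3 by (meson not_less order.trans)
    then show False using d1 d4 by simp
  qed
  have "inj_on f S"
  proof (rule inj_onI)
    fix n m assume "n \<in> S" "m \<in> S" "f n = f m"
    then show "n = m" using ne[of n m] ne[of m n] by (cases n m rule: linorder_cases) auto
  qed
  moreover have "f ` S \<subseteq> {..<K}" using f by auto
  ultimately have cS: "card S \<le> K" using card_inj_on_le[of f S "{..<K}"] by auto
  have "(\<Sum>n=1..N. if \<eta> (X n \<omega>) \<noteq> \<eta> (Xt n \<omega>) then 1 else 0 :: real)
     \<le> (\<Sum>n=1..N. indicator A (X n \<omega>) + indicator S n)"
    by (intro sum_mono) (auto simp: S_def indicator_def)
  also have "\<dots> = (\<Sum>n=1..N. indicator A (X n \<omega>)) + real (card S)"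
  proof -
    have sub: "S \<subseteq> {1..N}" by (auto simp: S_def)
    have "(\<Sum>n=1..N. indicator S n :: real) = real (card ({1..N} \<inter> S))"
    proof -
      have "(\<Sum>n\<in>{1..N}\<inter>S. 1::real) = (\<Sum>n=1..N. indicator S n)"
        by (simp add: sum.inter_restrict indicator_def)
      then show ?thesis by simp
    qed
    also have "{1..N} \<inter> S = S" using sub by blast
    finally show ?thesis by (simp add: sum.distrib)
  qed
  also have "\<dots> \<le> (\<Sum>n=1..N. indicator A (X n \<omega>)) + real K" using cS by simp
  finally show ?thesis by (simp add: A_def)
qed


theorem theorem1:
  fixes P :: "'w measure" and \<nu> :: "'a::metric_space measure"
    and Y :: "'b measure" and \<eta> :: "'a \<Rightarrow> 'b"
    and X Xt :: "nat \<Rightarrow> 'w \<Rightarrow> 'a"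
  assumes "separable_metric TYPE('a)"
    and "sets \<nu> = sets borel" and "finite_measure \<nu>"
    and "prob_space P"
    and "\<And>n. X n \<in> P \<rightarrow>\<^sub>M borel"
    and "ergodically_dominated P X \<nu>"
    and "\<eta> \<in> borel \<rightarrow>\<^sub>M Y"
    and "boundary \<eta> \<in> null_sets \<nu>"
    and "nn_process X Xt"
    and "\<And>n. n \<ge> 1 \<Longrightarrow> Xt n \<in> P \<rightarrow>\<^sub>M borel"
  shows "AE \<omega> in P. limsup (\<lambda>N. ereal ((\<Sum>n=1..N. if \<eta> (X n \<omega>) \<noteq> \<eta> (Xt n \<omega>) then 1 else 0) / real N)) = 0"
proof -
  interpret nu: finite_measure \<nu> by fact
  obtain D :: "'a set" where D: "countable D" "closure D = UNIV"
    using assms(1) unfolding separable_metric_def by blast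
  define mist where "mist = (\<lambda>\<omega> N. ereal ((\<Sum>n=1..N. if \<eta> (X n \<omega>) \<noteq> \<eta> (Xt n \<omega>) then 1 else 0) / real N))"
  have main: "AE \<omega> in P. limsup (mist \<omega>) < ereal \<epsilon>" if \<epsilon>: "\<epsilon> > 0" for \<epsilon>
  proof -
    obtain \<delta> where \<delta>: "\<delta> > 0" "\<forall>A\<in>sets borel. measure \<nu> A < \<delta> \<longrightarrow>
        (AE \<omega> in P. limsup (\<lambda>N. ereal ((\<Sum>n=1..N. indicator A (X n \<omega>)) / real N)) < ereal \<epsilon>)"
      using assms(6) \<epsilon> unfolding ergodically_dominated_def by blast
    define U where "U m = {x. margin \<eta> x < ereal (1 / real (Suc m))}" for m
    have Usets: "range U \<subseteq> sets \<nu>" using margin_open assms(2) by (auto simp: U_def intro!: borel_open)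
    have Udec: "decseq U"
    proof (rule decseq_SucI)
      fix m
      have "ereal (1 / real (Suc (Suc m))) \<le> ereal (1 / real (Suc m))"
        by (simp add: frac_le)
      then show "U (Suc m) \<subseteq> U m" unfolding U_def using order_less_le_trans by blast
    qed
    have "(\<lambda>m. measure \<nu> (U m)) \<longlonglongrightarrow> measure \<nu> (\<Inter>m. U m)"
      by (rule nu.finite_Lim_measure_decseq[OF Usets Udec])
    moreover have "(\<Inter>m. U m) = boundary \<eta>" unfolding U_def by (rule boundary_Inter)
    moreover have "measure \<nu> (boundary \<eta>) = 0" using assms(8) by (simp add: measure_def null_setsD1)
    ultimately have "(\<lambda>m. measure \<nu> (U m)) \<longlonglongrightarrow> 0" by simp
    then have "eventually (\<lambda>m. measure \<nu> (U m) < \<delta>/2) sequentially"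
      using \<delta>(1) by (intro order_tendstoD(2)) auto
    then obtain m where m: "measure \<nu> (U m) < \<delta>/2" by (auto simp: eventually_sequentially)
    define r where "r = 1 / real (Suc m)"
    have r: "r > 0" by (simp add: r_def)
    define B where "B k = ball (from_nat_into D k) (r/2)" for k
    have rB: "dist x y < r" if "x \<in> B k" "y \<in> B k" for k x y
      using that dist_triangle[of x y "from_nat_into D k"] by (auto simp: B_def dist_commute)
    have cover: "\<exists>k. x \<in> B k" for x
    proof -
      have "x \<in> closure D" using D by simp
      then obtain d where "d \<in> D" "dist d x < r/2" using r \<open>x \<in> closure D\<close> unfolding closure_approachable by (metis half_gt_zero)
      moreover obtain k where "from_nat_into D k = d" using from_nat_into_surj[OF D(1) \<open>d \<in> D\<close>] by blast
      ultimately show ?thesis by (auto simp: B_def)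
    qed
    define V where "V K = - (\<Union>k<K. B k)" for K
    have Vclosed: "closed (V K)" for K unfolding V_def B_def by (intro closed_Compl open_UN) auto
    have Vsets: "range V \<subseteq> sets \<nu>" using Vclosed assms(2) by auto
    have Vdec: "decseq V" unfolding decseq_def V_def by auto
    have "(\<lambda>K. measure \<nu> (V K)) \<longlonglongrightarrow> measure \<nu> (\<Inter>K. V K)"
      by (rule nu.finite_Lim_measure_decseq[OF Vsets Vdec])
    moreover have "(\<Inter>K. V K) = {}"
    proof -
      have "x \<notin> (\<Inter>K. V K)" for x
        using cover[of x] by (auto simp: V_def)
      then show ?thesis by blast
    qed
    ultimately have "(\<lambda>K. measure \<nu> (V K)) \<longlonglongrightarrow> 0" by simp
    then have "eventually (\<lambda>K. measure \<nu> (V K) < \<delta>/2) sequentially"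
      using \<delta>(1) by (intro order_tendstoD(2)) auto
    then obtain K where K: "measure \<nu> (V K) < \<delta>/2" by (auto simp: eventually_sequentially)
    define A where "A = U m \<union> V K"
    have Asets: "A \<in> sets borel" using Usets Vsets assms(2) by (auto simp: A_def)
    have "measure \<nu> A \<le> measure \<nu> (U m) + measure \<nu> (V K)"
      unfolding A_def using Usets Vsets by (intro measure_Un_le) auto
    then have "measure \<nu> A < \<delta>" using m K by simp
    then have AE: "AE \<omega> in P. limsup (\<lambda>N. ereal ((\<Sum>n=1..N. indicator A (X n \<omega>)) / real N)) < ereal \<epsilon>"
      using \<delta>(2) Asets by blast
    show ?thesis
    proof (rule eventually_mono[OF AE])
      fix \<omega>
      assume lt: "limsup (\<lambda>N. ereal ((\<Sum>n=1..N. indicator A (X n \<omega>)) / real N)) < ereal \<epsilon>"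
      define b where "b = (\<lambda>N. ereal ((\<Sum>n=1..N. indicator A (X n \<omega>)) / real N))"
      define c where "c = (\<lambda>N::nat. ereal (real K / real N))"
      have le: "mist \<omega> N \<le> b N + c N" for N
      proof -
        have "(\<Sum>n=1..N. if \<eta> (X n \<omega>) \<noteq> \<eta> (Xt n \<omega>) then 1 else 0 :: real)
           \<le> (\<Sum>n=1..N. indicator A (X n \<omega>)) + real K"
          using count_bound[where N=N and K=K and \<omega>=\<omega> and \<eta>=\<eta>, OF assms(9) rB] by (simp add: A_def U_def V_def r_def)
        then have "(\<Sum>n=1..N. if \<eta> (X n \<omega>) \<noteq> \<eta> (Xt n \<omega>) then 1 else 0 :: real) / real N
           \<le> ((\<Sum>n=1..N. indicator A (X n \<omega>)) + real K) / real N"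
          by (intro divide_right_mono) auto
        then show ?thesis by (simp add: mist_def b_def c_def add_divide_distrib)
      qed
      have "limsup (mist \<omega>) \<le> limsup (\<lambda>N. b N + c N)"
        using le by (intro Limsup_mono) auto
      also have "\<dots> \<le> limsup b + limsup c" by (rule ereal_limsup_add_mono)
      also have "limsup c = 0"
      proof -
        have "(\<lambda>N. real K / real N) \<longlonglongrightarrow> 0" by (rule lim_const_over_n)
        then have "c \<longlonglongrightarrow> ereal 0" unfolding c_def by (intro tendsto_ereal)
        then show ?thesis using lim_imp_Limsup[OF trivial_limit_sequentially] by (simp add: zero_ereal_def)
      qed
      finally show "limsup (mist \<omega>) < ereal \<epsilon>" using lt by (simp add: b_def)
    qed
  qed
  have "AE \<omega> in P. \<forall>j. limsup (mist \<omega>) < ereal (1 / real (Suc j))"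
    by (subst AE_all_countable) (auto intro: main)
  then have "AE \<omega> in P. limsup (mist \<omega>) = 0"
  proof (rule eventually_mono)
    fix \<omega> assume h: "\<forall>j. limsup (mist \<omega>) < ereal (1 / real (Suc j))"
    have "0 \<le> limsup (mist \<omega>)"
      by (intro le_Limsup always_eventually) (auto simp: mist_def intro!: divide_nonneg_nonneg sum_nonneg)
    then show "limsup (mist \<omega>) = 0" using h by (intro ereal_zeroI) auto
  qed
  then show ?thesis by (simp add: mist_def)
qed

end
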